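(* Let $X$ be an Alexandroff space and define an equivalence relation $\sim$ on $X$ by $x\sim y$ if and only if $S(x)=S(y)$. Then the quotient space $X/\sim$ (with the quotient topology) is discrete if and only if $S(x)$ is irreducible for every $x\in X$.
   Context: A topological space $X$ is an Alexandroff space if arbitrary intersections of open sets are open. In an Alexandroff space, $S(x)$ denotes the minimal open neighborhood of $x$, i.e. the intersection of all open sets containing $x$, which is open. $S(x)$ is called irreducible if for every $y\in X$, $S(y)\subseteq S(x)$ implies $S(y)=S(x)$. *)

theory Defs
  imports "HOL-Analysis.Analysis"
begin

text \<open>Alexandroff space: arbitrary (nonempty) intersections of open sets are open.
  The empty intersection is the whole space, which is always open.\<close>
definition alexandroff_space :: "'a topology \<Rightarrow> bool" where
  "alexandroff_space X \<longleftrightarrow>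
     (\<forall>\<F>. \<F> \<noteq> {} \<and> (\<forall>U\<in>\<F>. openin X U) \<longrightarrow> openin X (\<Inter>\<F>))"

definition min_nbhd :: "'a topology \<Rightarrow> 'a \<Rightarrow> 'a set" where
  "min_nbhd X x = \<Inter>{U. openin X U \<and> x \<in> U}"

definition irreducible_nbhd :: "'a topology \<Rightarrow> 'a \<Rightarrow> bool" where
  "irreducible_nbhd X x \<longleftrightarrow>
     (\<forall>y\<in>topspace X. min_nbhd X y \<subseteq> min_nbhd X x \<longrightarrow> min_nbhd X y = min_nbhd X x)"

definition same_nbhd_rel :: "'a topology \<Rightarrow> ('a \<times> 'a) set" where
  "same_nbhd_rel X = {(x, y). x \<in> topspace X \<and> y \<in> topspace X \<and> min_nbhd X x = min_nbhd X y}"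

text \<open>Quotient topology on the set of equivalence classes: a set of classes is open
  iff its union (the preimage under the quotient map) is open in X.\<close>
definition quotient_topology :: "'a topology \<Rightarrow> ('a \<times> 'a) set \<Rightarrow> 'a set topology" where
  "quotient_topology X R =
     topology (\<lambda>\<U>. \<U> \<subseteq> topspace X // R \<and> openin X (\<Union>\<U>))"

end

theory Submission
  imports Defs
begin

lemma equiv_rel: "equiv (topspace X) (same_nbhd_rel X)"
  unfolding equiv_def refl_on_def sym_def trans_def same_nbhd_rel_def by auto

lemma quot_open:
  "openin (quotient_topology X (same_nbhd_rel X)) U \<longleftrightarrow>
    U \<subseteq> topspace X // same_nbhd_rel X \<and> openin X (\<Union>U)"
proof -
  let ?Q = "topspace X // same_nbhd_rel X"
  have istop: "istopology (\<lambda>\<U>. \<U> \<subseteq> ?Q \<and> openin X (\<Union>\<U>))"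
    unfolding istopology_def
  proof (rule conjI; intro allI impI)
    fix S T assume S: "S \<subseteq> ?Q \<and> openin X (\<Union>S)" and T: "T \<subseteq> ?Q \<and> openin X (\<Union>T)"
    have "\<Union>(S \<inter> T) = \<Union>S \<inter> \<Union>T"
    proof
      show "\<Union>S \<inter> \<Union>T \<subseteq> \<Union>(S \<inter> T)"
      proof
        fix z assume "z \<in> \<Union>S \<inter> \<Union>T"
        then obtain a b where ab: "a \<in> S" "b \<in> T" "z \<in> a" "z \<in> b" by auto
        then have "a = b \<or> a \<inter> b = {}" using quotient_disj[OF equiv_rel] S T by blast
        then show "z \<in> \<Union>(S \<inter> T)" using ab by auto
      qed
    qed blast
    moreover have "openin X (\<Union>S \<inter> \<Union>T)" using S T by (simp add: openin_Int)
    ultimately show "S \<inter> T \<subseteq> ?Q \<and> openin X (\<Union>(S \<inter> T))" using S T by auto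
  next
    fix K assume K: "\<forall>S\<in>K. S \<subseteq> ?Q \<and> openin X (\<Union>S)"
    have "\<Union>(\<Union>K) = \<Union>((\<lambda>S. \<Union>S) ` K)" by auto
    moreover have "openin X (\<Union>((\<lambda>S. \<Union>S) ` K))" using K by (intro openin_Union) auto
    ultimately show "\<Union>K \<subseteq> ?Q \<and> openin X (\<Union>(\<Union>K))" using K by auto
  qed
  show ?thesis unfolding quotient_topology_def using topology_inverse'[OF istop] by simp
qed

lemma class_eq: "x \<in> topspace X \<Longrightarrow> same_nbhd_rel X `` {x} = {y \<in> topspace X. min_nbhd X y = min_nbhd X x}"
  unfolding same_nbhd_rel_def by auto

lemma self_in: "x \<in> topspace X \<Longrightarrow> x \<in> min_nbhd X x"
  unfolding min_nbhd_def by auto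

lemma nbhd_open: "alexandroff_space X \<Longrightarrow> x \<in> topspace X \<Longrightarrow> openin X (min_nbhd X x)"
  unfolding min_nbhd_def alexandroff_space_def
  by (metis (mono_tags, lifting) empty_iff mem_Collect_eq openin_topspace)

lemma nbhd_min: "openin X U \<Longrightarrow> x \<in> U \<Longrightarrow> min_nbhd X x \<subseteq> U"
  unfolding min_nbhd_def by auto

theorem theorem9:
  fixes X :: "'a topology"
  assumes "alexandroff_space X"
  shows "quotient_topology X (same_nbhd_rel X) = discrete_topology (topspace X // same_nbhd_rel X)
         \<longleftrightarrow> (\<forall>x\<in>topspace X. irreducible_nbhd X x)"
proof -
  let ?Q = "topspace X // same_nbhd_rel X"
  have "quotient_topology X (same_nbhd_rel X) = discrete_topology ?Q \<longleftrightarrow> (\<forall>U. U \<subseteq> ?Q \<longrightarrow> openin X (\<Union>U))"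
    unfolding topology_eq quot_open by auto
  also have "\<dots> \<longleftrightarrow> (\<forall>c\<in>?Q. openin X c)"
  proof
    assume "\<forall>U. U \<subseteq> ?Q \<longrightarrow> openin X (\<Union>U)"
    then show "\<forall>c\<in>?Q. openin X c" by (metis cSup_singleton empty_subsetI insert_subset)
  next
    assume "\<forall>c\<in>?Q. openin X c"
    then show "\<forall>U. U \<subseteq> ?Q \<longrightarrow> openin X (\<Union>U)" by (meson openin_Union subsetD)
  qed
  also have "\<dots> \<longleftrightarrow> (\<forall>x\<in>topspace X. openin X {y \<in> topspace X. min_nbhd X y = min_nbhd X x})"
    unfolding quotient_def by (auto simp: class_eq)
  also have "\<dots> \<longleftrightarrow> (\<forall>x\<in>topspace X. irreducible_nbhd X x)"
  proof
    assume H: "\<forall>x\<in>topspace X. openin X {y \<in> topspace X. min_nbhd X y = min_nbhd X x}"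
    show "\<forall>x\<in>topspace X. irreducible_nbhd X x"
      unfolding irreducible_nbhd_def
    proof (intro ballI impI)
      fix x y assume x: "x \<in> topspace X" and y: "y \<in> topspace X" and sub: "min_nbhd X y \<subseteq> min_nbhd X x"
      have "min_nbhd X x \<subseteq> {y \<in> topspace X. min_nbhd X y = min_nbhd X x}"
        using H x by (intro nbhd_min) (auto intro: self_in)
      then show "min_nbhd X y = min_nbhd X x" using sub self_in[OF y] by auto
    qed
  next
    assume H: "\<forall>x\<in>topspace X. irreducible_nbhd X x"
    show "\<forall>x\<in>topspace X. openin X {y \<in> topspace X. min_nbhd X y = min_nbhd X x}"
    proof
      fix x assume x: "x \<in> topspace X"
      have "{y \<in> topspace X. min_nbhd X y = min_nbhd X x} = min_nbhd X x"
      proof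
        show "{y \<in> topspace X. min_nbhd X y = min_nbhd X x} \<subseteq> min_nbhd X x"
          using self_in by (metis (mono_tags, lifting) mem_Collect_eq subsetI)
        show "min_nbhd X x \<subseteq> {y \<in> topspace X. min_nbhd X y = min_nbhd X x}"
        proof
          fix y assume yx: "y \<in> min_nbhd X x"
          have op: "openin X (min_nbhd X x)" using nbhd_open[OF assms x] .
          then have y: "y \<in> topspace X" using yx openin_subset by blast
          have "min_nbhd X y \<subseteq> min_nbhd X x" using nbhd_min[OF op yx] .
          then show "y \<in> {y \<in> topspace X. min_nbhd X y = min_nbhd X x}"
            using H x y unfolding irreducible_nbhd_def by auto
        qed
      qed
      then show "openin X {y \<in> topspace X. min_nbhd X y = min_nbhd X x}"
        using nbhd_open[OF assms x] by simp
    qed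
  qed
  finally show ?thesis .
qed

end
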